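(* Let $k \ge 2$ be an integer. If $G$ is a connected twin-free graph with $n$ vertices and $i_{\max}(G) = k$, then $n \le 2^{k-1}+k-2$. Furthermore, equality holds only if the graph $G$ is formed by taking a clique $K_{k-1}$ and adding, for every non-empty vertex subset $S$ of this clique, a vertex whose neighbourhood is precisely $S$.
   Context: $i_{\max}(G)$ denotes the number of maximal independent sets of $G$. A graph is twin-free if no two vertices have the same open neighbourhood. *)

theory Defs
  imports Main
begin

definition simple_graph :: "'a set \<Rightarrow> ('a \<Rightarrow> 'a \<Rightarrow> bool) \<Rightarrow> bool" where
  "simple_graph V E \<longleftrightarrow> finite V \<and> (\<forall>u v. E u v \<longrightarrow> u \<in> V \<and> v \<in> V)
     \<and> (\<forall>u v. E u v \<longrightarrow> E v u) \<and> (\<forall>v. \<not> E v v)"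

definition nbhd :: "'a set \<Rightarrow> ('a \<Rightarrow> 'a \<Rightarrow> bool) \<Rightarrow> 'a \<Rightarrow> 'a set" where
  "nbhd V E v = {w \<in> V. E v w}"

definition connected_graph :: "'a set \<Rightarrow> ('a \<Rightarrow> 'a \<Rightarrow> bool) \<Rightarrow> bool" where
  "connected_graph V E \<longleftrightarrow> V \<noteq> {} \<and> (\<forall>u\<in>V. \<forall>v\<in>V. E\<^sup>*\<^sup>* u v)"

definition twin_free :: "'a set \<Rightarrow> ('a \<Rightarrow> 'a \<Rightarrow> bool) \<Rightarrow> bool" where
  "twin_free V E \<longleftrightarrow> (\<forall>u\<in>V. \<forall>v\<in>V. u \<noteq> v \<longrightarrow> nbhd V E u \<noteq> nbhd V E v)"

definition independent :: "'a set \<Rightarrow> ('a \<Rightarrow> 'a \<Rightarrow> bool) \<Rightarrow> 'a set \<Rightarrow> bool" where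
  "independent V E S \<longleftrightarrow> S \<subseteq> V \<and> (\<forall>u\<in>S. \<forall>v\<in>S. \<not> E u v)"

definition maximal_independent :: "'a set \<Rightarrow> ('a \<Rightarrow> 'a \<Rightarrow> bool) \<Rightarrow> 'a set \<Rightarrow> bool" where
  "maximal_independent V E S \<longleftrightarrow> independent V E S \<and>
     (\<forall>T. independent V E T \<and> S \<subseteq> T \<longrightarrow> T = S)"

definition i_max :: "'a set \<Rightarrow> ('a \<Rightarrow> 'a \<Rightarrow> bool) \<Rightarrow> nat" where
  "i_max V E = card {S. maximal_independent V E S}"

definition clique :: "'a set \<Rightarrow> ('a \<Rightarrow> 'a \<Rightarrow> bool) \<Rightarrow> 'a set \<Rightarrow> bool" where
  "clique V E C \<longleftrightarrow> C \<subseteq> V \<and> (\<forall>u\<in>C. \<forall>v\<in>C. u \<noteq> v \<longrightarrow> E u v)"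

definition clique_plus_subsets :: "nat \<Rightarrow> 'a set \<Rightarrow> ('a \<Rightarrow> 'a \<Rightarrow> bool) \<Rightarrow> bool" where
  "clique_plus_subsets k V E \<longleftrightarrow> (\<exists>C. clique V E C \<and> card C = k - 1 \<and>
     bij_betw (nbhd V E) (V - C) {S. S \<subseteq> C \<and> S \<noteq> {}})"

end

theory Submission imports Defs begin

definition helly :: "'b set set \<Rightarrow> bool" where
  "helly F \<longleftrightarrow> (\<forall>Q\<subseteq>F. Q \<noteq> {} \<longrightarrow> (\<forall>A\<in>Q. \<forall>B\<in>Q. A \<inter> B \<noteq> {}) \<longrightarrow> \<Inter>Q \<noteq> {})"

lemma helly_subset: "helly F \<Longrightarrow> G \<subseteq> F \<Longrightarrow> helly G"
  unfolding helly_def by (meson order_trans)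

lemma hellyD: "helly F \<Longrightarrow> Q \<subseteq> F \<Longrightarrow> Q \<noteq> {} \<Longrightarrow> (\<And>A B. A \<in> Q \<Longrightarrow> B \<in> Q \<Longrightarrow> A \<inter> B \<noteq> {})
   \<Longrightarrow> \<exists>x. \<forall>A\<in>Q. x \<in> A"
  unfolding helly_def by (metis Inter_iff ex_in_conv)

lemma pair_bound:
  assumes "finite U" "U \<noteq> {}" "finite P" "\<forall>A\<in>P. A \<subseteq> U \<and> A \<noteq> {}"
    "\<forall>A\<in>P. U - A \<in> P" "helly P"
  shows "card P + 2 \<le> 2 * card ((\<lambda>i. {A\<in>P. i\<in>A}) ` U)"
  using assms
proof (induction "card P" arbitrary: P rule: less_induct)
  case less
  show ?case
  proof (cases "P = {}")
    case True
    then have "(\<lambda>i. {A\<in>P. i\<in>A}) ` U = {{}}" using less.prems(2) by auto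
    then show ?thesis using True by simp
  next
    case False
    then obtain B0 where "B0 \<in> P" by blast
    obtain B where B: "B \<in> P" and Bmin: "\<forall>A. A \<in> P \<longrightarrow> card B \<le> card A"
      using ex_has_least_nat[of "\<lambda>A. A \<in> P" B0 card] \<open>B0 \<in> P\<close> by blast
    have BU: "B \<subseteq> U" and Bne: "B \<noteq> {}" using B less.prems(4) by auto
    have cB: "U - B \<in> P" using B less.prems(5) by auto
    have cBne: "U - B \<noteq> {}" using cB less.prems(4) by auto
    have BcB: "B \<noteq> U - B" using Bne BU by blast
    obtain i where i: "i \<in> B" using Bne by blast
    define P' where "P' = P - {B, U - B}"
    have cardP': "card P' + 2 = card P"
    proof -
      have "card {B, U - B} = 2" using BcB by simp
      moreover have "{B, U - B} \<subseteq> P" using B cB by blast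
      moreover have "card {B, U - B} \<le> card P" using calculation(2) less.prems(3) card_mono by blast
      ultimately show ?thesis unfolding P'_def using less.prems(3)
        by (simp add: card_Diff_subset)
    qed
    have P'sub: "P' \<subseteq> P" unfolding P'_def by blast
    have P'cc: "\<forall>A\<in>P'. U - A \<in> P'"
    proof
      fix A assume A: "A \<in> P'"
      then have AP: "A \<in> P" "A \<subseteq> U" "A \<noteq> B" "A \<noteq> U - B" using P'_def less.prems(4) by auto
      have "U - A \<in> P" using AP less.prems(5) by blast
      moreover have "U - A \<noteq> B" using AP BU by blast
      moreover have "U - A \<noteq> U - B" using AP BU by blast
      ultimately show "U - A \<in> P'" unfolding P'_def by blast
    qed
    have IH: "card P' + 2 \<le> 2 * card ((\<lambda>i. {A\<in>P'. i\<in>A}) ` U)"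
    proof (rule less.hyps)
      show "card P' < card P" using cardP' by simp
      show "finite U" "U \<noteq> {}" by (fact less.prems(1), fact less.prems(2))
      show "finite P'" using P'sub less.prems(3) finite_subset by blast
      show "\<forall>A\<in>P'. A \<subseteq> U \<and> A \<noteq> {}" using P'sub less.prems(4) by blast
      show "helly P'" using helly_subset less.prems(6) P'sub by blast
      show "\<forall>A\<in>P'. U - A \<in> P'" by (fact P'cc)
    qed
    define Q where "Q = {A\<in>P'. i\<in>A} \<union> {U - B}"
    have "\<exists>x. \<forall>A\<in>Q. x \<in> A"
    proof (rule hellyD[OF less.prems(6)])
      show "Q \<subseteq> P" unfolding Q_def P'_def using cB by blast
      show "Q \<noteq> {}" unfolding Q_def by blast
      have *: "A \<inter> (U - B) \<noteq> {}" if A: "A \<in> P'" for A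
      proof
        assume "A \<inter> (U - B) = {}"
        moreover have "A \<subseteq> U" "A \<in> P" "A \<noteq> B" using A P'_def less.prems(4) by auto
        ultimately have "A \<subseteq> B" by blast
        moreover have "card B \<le> card A" using Bmin \<open>A \<in> P\<close> by blast
        moreover have "finite B" using BU less.prems(1) finite_subset by blast
        ultimately have "A = B" using card_seteq by blast
        then show False using \<open>A \<noteq> B\<close> by blast
      qed
      fix A C assume "A \<in> Q" "C \<in> Q"
      then show "A \<inter> C \<noteq> {}" unfolding Q_def using * cBne by blast
    qed
    then obtain j where j: "\<forall>A\<in>Q. j \<in> A" by blast
    have jU: "j \<in> U" "j \<notin> B" using j unfolding Q_def by auto
    have iU: "i \<in> U" using i BU by blast
    define s where "s = (\<lambda>P i. {A\<in>P. i\<in>(A::'a set)})"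
    have jP': "j \<in> A" if "A \<in> P'" "i \<in> A" for A
      using j that unfolding Q_def by simp
    have jP'': "i \<in> A" if A: "A \<in> P'" "j \<in> A" for A
    proof (rule ccontr)
      assume "i \<notin> A"
      then have "i \<in> U - A" using iU by simp
      moreover have "U - A \<in> P'" using A(1) P'cc by simp
      ultimately have "j \<in> U - A" using jP'[of "U - A"] by blast
      then show False using A(2) by simp
    qed
    have seq: "s P' i = s P' j"
      unfolding s_def using jP' jP'' by (auto simp del: Set.Collect_mem_eq)
    have "B \<in> s P i" "B \<notin> s P j" using B i jU unfolding s_def by auto
    then have sneq: "s P i \<noteq> s P j" by metis
    define g where "g = (\<lambda>S. S - {B, U - B})"
    have sP': "s P' y = g (s P y)" for y unfolding s_def g_def P'_def by auto
    have img: "s P' ` U = g ` (s P ` U)" using sP' by (simp add: image_image)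
    have fin: "finite (s P ` U)" using less.prems(1) by simp
    have ninj: "\<not> inj_on g (s P ` U)"
    proof
      assume "inj_on g (s P ` U)"
      moreover have "g (s P i) = g (s P j)" using seq sP' by metis
      ultimately have "s P i = s P j" using iU jU by (meson image_eqI inj_on_def)
      then show False using sneq by blast
    qed
    have "card (g ` (s P ` U)) \<le> card (s P ` U)" using card_image_le fin by blast
    moreover have "card (g ` (s P ` U)) \<noteq> card (s P ` U)" using ninj inj_on_iff_eq_card fin by blast
    ultimately have "card (s P' ` U) < card (s P ` U)" using img by simp
    then show ?thesis using IH cardP' unfolding s_def by simp
  qed
qed

lemma helly3:
  assumes "helly F" "X \<in> F" "Y \<in> F" "Z \<in> F" "X \<inter> Y \<noteq> {}" "X \<inter> Z \<noteq> {}" "Y \<inter> Z \<noteq> {}"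
  shows "X \<inter> Y \<inter> Z \<noteq> {}"
proof -
  have "\<exists>y. \<forall>A\<in>{X,Y,Z}. y \<in> A"
  proof (rule hellyD[OF assms(1)])
    show "{X, Y, Z} \<subseteq> F" using assms by blast
    show "{X, Y, Z} \<noteq> {}" by blast
    fix A B assume "A \<in> {X, Y, Z}" "B \<in> {X, Y, Z}"
    then show "A \<inter> B \<noteq> {}" using assms(5-7) by auto
  qed
  then show ?thesis by blast
qed

lemma laminar:
  assumes H: "helly F" and T2: "\<forall>X. X \<subseteq> U \<and> X \<noteq> {} \<and> X \<noteq> U \<longrightarrow> X \<in> F \<or> U - X \<in> F"
    and A: "A \<in> F" "A \<subseteq> U" and B: "B \<in> F" "U - B \<in> F" "B \<subseteq> U"
    and c1: "A \<inter> B \<noteq> {}" and c2: "A - B \<noteq> {}" and c3: "B - A \<noteq> {}" and c4: "U - (A \<union> B) \<noteq> {}"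
  shows False
proof -
  define X where "X = (A \<inter> B) \<union> (U - (A \<union> B))"
  have "X \<subseteq> U" "X \<noteq> {}" "X \<noteq> U" unfolding X_def using A B c1 c2 by auto
  then have "X \<in> F \<or> U - X \<in> F" using T2 by blast
  then show False
  proof
    assume "X \<in> F"
    have "X \<inter> A \<inter> (U - B) \<noteq> {}"
      by (rule helly3[OF H \<open>X \<in> F\<close> A(1) B(2)]) (use A c1 c2 c4 in \<open>auto simp: X_def\<close>)
    then show False unfolding X_def by blast
  next
    assume "U - X \<in> F"
    have "(U - X) \<inter> A \<inter> B \<noteq> {}"
      by (rule helly3[OF H \<open>U - X \<in> F\<close> A(1) B(1)]) (use A B c1 c2 c3 in \<open>auto simp: X_def\<close>)
    then show False unfolding X_def by blast
  qed
qed


lemma pairwise_insert: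
  assumes "\<And>A B. A \<in> W \<Longrightarrow> B \<in> W \<Longrightarrow> A \<inter> B \<noteq> {}" "\<And>A. A \<in> W \<Longrightarrow> A \<inter> X \<noteq> {}"
    "X \<noteq> {}" "A \<in> W \<union> {X}" "B \<in> W \<union> {X}"
  shows "A \<inter> B \<noteq> {}"
proof -
  have "A \<in> W \<or> A = X" "B \<in> W \<or> B = X" using assms(4,5) by auto
  then show ?thesis using assms(1-3) by (metis Int_commute Int_absorb)
qed

lemma nonleaf:
  assumes H: "helly F" and T2: "\<forall>X. X \<subseteq> U \<and> X \<noteq> {} \<and> X \<noteq> U \<longrightarrow> X \<in> F \<or> U - X \<in> F"
    and PF: "P = {A\<in>F. U - A \<in> F}" and FU: "\<forall>A\<in>F. A \<subseteq> U" and fU: "finite U"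
    and sep: "\<forall>b\<in>U. \<forall>y\<in>U. b \<noteq> y \<longrightarrow> (\<exists>A\<in>P. b \<in> A \<and> y \<notin> A)"
    and b: "b \<in> U" "{b} \<notin> P" and c: "c \<in> U" "{c} \<notin> P" and bc: "b \<noteq> c"
  shows False
proof -
  have Pcc: "U - A \<in> P" if "A \<in> P" for A
  proof -
    have "A \<in> F" "U - A \<in> F" "A \<subseteq> U" using that PF FU by auto
    moreover have "U - (U - A) = A" using \<open>A \<subseteq> U\<close> by blast
    ultimately show ?thesis using PF by simp
  qed
  have PU: "A \<subseteq> U" "A \<in> F" if "A \<in> P" for A using that PF FU by auto
  define \<alpha> where "\<alpha> = {A\<in>P. b \<in> A \<and> c \<notin> A}"
  obtain A1 where A1: "A1 \<in> \<alpha>" using sep b c bc unfolding \<alpha>_def by blast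
  obtain A0 where A0: "A0 \<in> \<alpha>" and A0min: "\<forall>A. A \<in> \<alpha> \<longrightarrow> card A0 \<le> card A"
    using ex_has_least_nat[of "\<lambda>A. A \<in> \<alpha>" A1 card] A1 by blast
  have A0P: "A0 \<in> P" "b \<in> A0" "c \<notin> A0" using A0 unfolding \<alpha>_def by auto
  have chain: "A0 \<subseteq> A" if A: "A \<in> \<alpha>" for A
  proof (rule ccontr)
    assume nsub: "\<not> A0 \<subseteq> A"
    have AP: "A \<in> P" "b \<in> A" "c \<notin> A" using A unfolding \<alpha>_def by auto
    show False
    proof (cases "A \<subseteq> A0")
      case True
      then have "A \<subset> A0" using nsub by blast
      moreover have "finite A0" using PU(1)[OF A0P(1)] fU finite_subset by blast
      ultimately have "card A < card A0" by (simp add: psubset_card_mono)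
      then show False using A0min A by fastforce
    next
      case False
      show False
      proof (rule laminar[OF H T2])
        show "A0 \<in> F" "A0 \<subseteq> U" using PU A0P by auto
        show "A \<in> F" "U - A \<in> F" "A \<subseteq> U" using PU Pcc AP by auto
        show "A0 \<inter> A \<noteq> {}" using A0P AP by blast
        show "A0 - A \<noteq> {}" using nsub by blast
        show "A - A0 \<noteq> {}" using False by blast
        show "U - (A0 \<union> A) \<noteq> {}" using c A0P AP by blast
      qed
    qed
  qed
  have "A0 \<noteq> {b}" using A0P b by blast
  define T where "T = A0 - {b}"
  have Tne: "T \<noteq> {}" unfolding T_def using \<open>A0 \<noteq> {b}\<close> A0P(2) by blast
  have TU: "T \<subseteq> U" unfolding T_def using PU A0P by blast
  define X where "X = U - {c} - T"
  have bX: "b \<in> X" unfolding X_def T_def using b bc by blast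
  have cX: "c \<notin> X" unfolding X_def by blast
  have XU: "X \<subseteq> U" unfolding X_def by blast
  have cXe: "U - X = {c} \<union> T" unfolding X_def using TU c by blast
  have notX: "X \<notin> F"
  proof
    assume XF: "X \<in> F"
    define W1 where "W1 = {A\<in>P. c \<in> A \<and> A \<noteq> {c}}"
    have "\<exists>y. \<forall>A\<in>W1 \<union> {X}. y \<in> A"
    proof (rule hellyD[OF H])
      show "W1 \<union> {X} \<subseteq> F" using XF PU unfolding W1_def by blast
      show "W1 \<union> {X} \<noteq> {}" by blast
      have meet: "A \<inter> X \<noteq> {}" if A: "A \<in> W1" for A
      proof
        assume dis: "A \<inter> X = {}"
        have AP: "A \<in> P" "c \<in> A" "A \<noteq> {c}" using A unfolding W1_def by auto
        have "A \<subseteq> {c} \<union> T" using dis PU(1)[OF AP(1)] unfolding X_def by blast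
        then have "b \<notin> A" unfolding T_def using bc by blast
        then have "U - A \<in> \<alpha>" unfolding \<alpha>_def using Pcc AP b by blast
        then have "A0 \<subseteq> U - A" using chain by blast
        then have "A \<inter> T = {}" unfolding T_def by blast
        then have "A \<subseteq> {c}" using \<open>A \<subseteq> {c} \<union> T\<close> by blast
        then show False using AP by blast
      qed
      fix A B assume "A \<in> W1 \<union> {X}" "B \<in> W1 \<union> {X}"
      then show "A \<inter> B \<noteq> {}"
      proof (rule pairwise_insert[rotated 3])
        show "X \<noteq> {}" using bX by blast
        show "A \<inter> X \<noteq> {}" if "A \<in> W1" for A using meet that .
        show "A \<inter> B \<noteq> {}" if "A \<in> W1" "B \<in> W1" for A B using that unfolding W1_def by blast
      qed
    qed
    then obtain y where y: "\<forall>A\<in>W1 \<union> {X}. y \<in> A" by (elim exE)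
    have "y \<in> X" using bspec[OF y, of X] by simp
    then have "y \<in> U" "y \<noteq> c" using XU cX by auto
    then have "c \<noteq> y" by simp
    then obtain A where "A \<in> P" "c \<in> A" "y \<notin> A" using sep c(1) \<open>y \<in> U\<close> by blast
    moreover have "A \<noteq> {c}" using \<open>A \<in> P\<close> c by blast
    ultimately have "A \<in> W1" unfolding W1_def by blast
    then show False using y \<open>y \<notin> A\<close> by blast
  qed
  have notcX: "U - X \<notin> F"
  proof
    assume XF: "U - X \<in> F"
    define W0 where "W0 = {A\<in>P. b \<in> A \<and> A \<noteq> {b}}"
    have "\<exists>y. \<forall>A\<in>W0 \<union> {U - X}. y \<in> A"
    proof (rule hellyD[OF H])
      show "W0 \<union> {U - X} \<subseteq> F" using XF PU unfolding W0_def by blast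
      show "W0 \<union> {U - X} \<noteq> {}" by blast
      have meet: "A \<inter> (U - X) \<noteq> {}" if A: "A \<in> W0" for A
      proof (cases "c \<in> A")
        case True
        then show ?thesis using cXe by blast
      next
        case False
        then have "A \<in> \<alpha>" using A unfolding W0_def \<alpha>_def by blast
        then have "T \<subseteq> A" using chain unfolding T_def by blast
        then show ?thesis using Tne cXe by blast
      qed
      fix A B assume "A \<in> W0 \<union> {U - X}" "B \<in> W0 \<union> {U - X}"
      then show "A \<inter> B \<noteq> {}"
      proof (rule pairwise_insert[rotated 3])
        show "U - X \<noteq> {}" using cXe by blast
        show "A \<inter> (U - X) \<noteq> {}" if "A \<in> W0" for A using meet that .
        show "A \<inter> B \<noteq> {}" if "A \<in> W0" "B \<in> W0" for A B using that unfolding W0_def by blast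
      qed
    qed
    then obtain y where y: "\<forall>A\<in>W0 \<union> {U - X}. y \<in> A" by (elim exE)
    have "y \<in> U - X" using bspec[OF y, of "U - X"] by simp
    then have "y \<in> U" "y \<noteq> b" using bX by auto
    then have "b \<noteq> y" by simp
    then obtain A where "A \<in> P" "b \<in> A" "y \<notin> A" using sep b(1) \<open>y \<in> U\<close> by blast
    moreover have "A \<noteq> {b}" using \<open>A \<in> P\<close> b by blast
    ultimately have "A \<in> W0" unfolding W0_def by blast
    then show False using y \<open>y \<notin> A\<close> by blast
  qed
  have "X \<noteq> {}" "X \<noteq> U" using bX cX c by auto
  then have "X \<in> F \<or> U - X \<in> F" using T2 XU by simp
  then show False using notX notcX by blast
qed


lemma family_main:
  fixes U :: "'b set" and F :: "'b set set"
  assumes fU: "finite U" and cU: "card U = k" and k2: "k \<ge> 2"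
    and FN: "\<forall>A\<in>F. A \<subseteq> U \<and> A \<noteq> {} \<and> A \<noteq> U"
    and H: "helly F"
  shows "card F \<le> 2^(k-1)+k-2 \<and> (card F = 2^(k-1)+k-2 \<longrightarrow>
     (\<exists>x\<in>U. (\<forall>j\<in>U-{x}. U-{j} \<in> F) \<and> (\<forall>A. A \<subseteq> U \<and> x \<in> A \<and> A \<noteq> U \<longrightarrow> A \<in> F)
        \<and> (\<forall>A\<in>F. x \<notin> A \<longrightarrow> (\<exists>j. A = {j}))))"
proof -
  define N where "N = {A. A \<subseteq> U \<and> A \<noteq> {} \<and> A \<noteq> U}"
  have Une: "U \<noteq> {}" using cU k2 by auto
  have NPow: "N = Pow U - {{}, U}" unfolding N_def by auto
  have finN: "finite N" unfolding NPow using fU by simp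
  have cardN: "card N = 2^k - 2"
  proof -
    have "card {{}, U} = 2" using Une by simp
    moreover have "{{}, U} \<subseteq> Pow U" by blast
    ultimately show ?thesis unfolding NPow using fU cU
      by (simp add: card_Diff_subset card_Pow)
  qed
  have FsubN: "F \<subseteq> N" using FN unfolding N_def by blast
  have finF: "finite F" using FsubN finN finite_subset by blast
  define P where "P = {A\<in>F. U - A \<in> F}"
  define Q where "Q = F - P"
  define c where "c = (\<lambda>A. U - A)"
  have injc: "inj_on c N" unfolding inj_on_def c_def N_def by blast
  have cQN: "c ` Q \<subseteq> N" unfolding c_def Q_def N_def using FN by auto
  have disj: "F \<inter> c ` Q = {}"
  proof (rule ccontr)
    assume "F \<inter> c ` Q \<noteq> {}"
    then obtain B where "B \<in> Q" "c B \<in> F" by blast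
    then show False unfolding Q_def P_def c_def by simp
  qed
  have finQ: "finite Q" unfolding Q_def using finF by simp
  have cardcQ: "card (c ` Q) = card Q"
    using card_image inj_on_subset[OF injc] FsubN unfolding Q_def by (metis Diff_subset order_trans)
  have Un1: "card (F \<union> c ` Q) = card F + card Q"
    using card_Un_disjoint[OF finF _ disj] finQ cardcQ by simp
  have Un2: "card (F \<union> c ` Q) \<le> card N" using card_mono[OF finN] FsubN cQN by simp
  have PF: "P \<subseteq> F" unfolding P_def by blast
  have cardFPQ: "card F = card P + card Q"
  proof -
    have "F = P \<union> Q" "P \<inter> Q = {}" unfolding Q_def using PF by auto
    moreover have "finite P" using PF finF finite_subset by blast
    ultimately show ?thesis using finQ card_Un_disjoint by metis
  qed
  have Pcc: "U - A \<in> P" if "A \<in> P" for A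
  proof -
    have "A \<in> F" "U - A \<in> F" "A \<subseteq> U" using that FN unfolding P_def by auto
    moreover have "U - (U - A) = A" using \<open>A \<subseteq> U\<close> by blast
    ultimately show "U - A \<in> P" unfolding P_def by simp
  qed
  define \<sigma> where "\<sigma> = (\<lambda>i. {A\<in>P. i\<in>A})"
  have pb: "card P + 2 \<le> 2 * card (\<sigma> ` U)" unfolding \<sigma>_def
  proof (rule pair_bound[OF fU Une])
    show "finite P" using PF finF finite_subset by blast
    show "\<forall>A\<in>P. A \<subseteq> U \<and> A \<noteq> {}" using PF FN by blast
    show "helly P" using helly_subset[OF H PF] .
    show "\<forall>A\<in>P. U - A \<in> P"
    proof
      fix A assume "A \<in> P"
      then have "A \<in> F" "U - A \<in> F" "A \<subseteq> U" using FN unfolding P_def by auto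
      moreover have "U - (U - A) = A" using \<open>A \<subseteq> U\<close> by blast
      ultimately show "U - A \<in> P" unfolding P_def by simp
    qed
  qed
  have imgle: "card (\<sigma> ` U) \<le> k" using card_image_le[OF fU] cU by simp
  define K where "K = (2::nat)^(k-1)"
  have kk: "k = Suc (k - 1)" using k2 by simp
  have K2: "2^k = 2 * K" unfolding K_def using kk by (metis power_Suc)
  have Kge: "K \<ge> 2" unfolding K_def using power_increasing[of 1 "k-1" "2::nat"] k2 by simp
  have bound: "card F \<le> K + k - 2"
    using Un1 Un2 cardN K2 pb imgle cardFPQ Kge k2 by linarith
  have "card F \<le> 2^(k-1)+k-2" using bound K_def by simp
  moreover have "card F = 2^(k-1)+k-2 \<longrightarrow>
     (\<exists>x\<in>U. (\<forall>j\<in>U-{x}. U-{j} \<in> F) \<and> (\<forall>A. A \<subseteq> U \<and> x \<in> A \<and> A \<noteq> U \<longrightarrow> A \<in> F)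
        \<and> (\<forall>A\<in>F. x \<notin> A \<longrightarrow> (\<exists>j. A = {j})))"
  proof
    assume eq: "card F = 2^(k-1)+k-2"
    then have eqK: "card F = K + k - 2" unfolding K_def .
    have tight1: "card (F \<union> c ` Q) = card N"
      using Un1 Un2 cardN K2 pb imgle cardFPQ Kge k2 eqK by linarith
    have tight2: "card (\<sigma> ` U) = card U"
      using Un1 Un2 cardN K2 pb imgle cardFPQ Kge k2 eqK cU by linarith
    have FcQ: "F \<union> c ` Q = N" using card_subset_eq[OF finN _ tight1] FsubN cQN by blast
    have T2: "\<forall>X. X \<subseteq> U \<and> X \<noteq> {} \<and> X \<noteq> U \<longrightarrow> X \<in> F \<or> U - X \<in> F"
    proof (intro allI impI)
      fix X assume "X \<subseteq> U \<and> X \<noteq> {} \<and> X \<noteq> U"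
      then have "X \<in> N" unfolding N_def by simp
      then have "X \<in> F \<or> X \<in> c ` Q" using FcQ by blast
      then show "X \<in> F \<or> U - X \<in> F"
      proof
        assume "X \<in> c ` Q"
        then obtain B where B: "B \<in> Q" "X = U - B" unfolding c_def by blast
        then have "B \<in> F" "B \<subseteq> U" using FN unfolding Q_def by auto
        then have "U - X = B" using B by auto
        then show ?thesis using \<open>B \<in> F\<close> by simp
      qed simp
    qed
    have injs: "inj_on \<sigma> U" using inj_on_iff_eq_card[OF fU, of \<sigma>] tight2 by blast
    have sep: "\<forall>b\<in>U. \<forall>y\<in>U. b \<noteq> y \<longrightarrow> (\<exists>A\<in>P. b \<in> A \<and> y \<notin> A)"
    proof (intro ballI impI)
      fix b y assume bY: "b \<in> U" "y \<in> U" "b \<noteq> y"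
      then have "\<sigma> b \<noteq> \<sigma> y" using injs unfolding inj_on_def by blast
      then obtain A where Ad: "(A \<in> \<sigma> b) \<noteq> (A \<in> \<sigma> y)" by (meson set_eqI)
      have mem: "A \<in> \<sigma> z \<longleftrightarrow> A \<in> P \<and> z \<in> A" for z unfolding \<sigma>_def by simp
      have A: "A \<in> P" "(b \<in> A \<and> y \<notin> A) \<or> (y \<in> A \<and> b \<notin> A)"
        using Ad unfolding mem by argo+
      show "\<exists>A\<in>P. b \<in> A \<and> y \<notin> A"
        using A(2)
      proof
        assume "b \<in> A \<and> y \<notin> A" then show ?thesis using A(1) by (intro bexI[of _ A]) simp_all
      next
        assume "y \<in> A \<and> b \<notin> A"
        then have "b \<in> U - A" "y \<notin> U - A" using bY by auto
        then show ?thesis using Pcc[OF A(1)] by (intro bexI[of _ "U - A"]) simp_all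
      qed
    qed
    have FU: "\<forall>A\<in>F. A \<subseteq> U" using FN by blast
    have leaf: "\<exists>x\<in>U. \<forall>j\<in>U-{x}. {j} \<in> P"
    proof (cases "\<forall>j\<in>U. {j} \<in> P")
      case True then show ?thesis using Une by blast
    next
      case False
      then obtain b where b: "b \<in> U" "{b} \<notin> P" by blast
      have "\<forall>j\<in>U-{b}. {j} \<in> P"
      proof
        fix j assume j: "j \<in> U - {b}"
        show "{j} \<in> P"
        proof (rule ccontr)
          assume "{j} \<notin> P"
          moreover have "j \<in> U" "b \<noteq> j" using j by auto
          ultimately show False using nonleaf[OF H T2 P_def FU fU sep b] by blast
        qed
      qed
      then show ?thesis using b by blast
    qed
    then obtain x where x: "x \<in> U" "\<forall>j\<in>U-{x}. {j} \<in> P" by blast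
    have co: "\<forall>j\<in>U-{x}. U - {j} \<in> F" using x unfolding P_def by blast
    have E1: "\<forall>A\<in>F. x \<notin> A \<longrightarrow> (\<exists>j. A = {j})"
    proof (intro ballI impI)
      fix A assume A: "A \<in> F" "x \<notin> A"
      have AU: "A \<subseteq> U" "A \<noteq> {}" using FN A by auto
      then obtain j where j: "j \<in> A" by blast
      show "\<exists>j. A = {j}"
      proof (rule ccontr)
        assume "\<nexists>j. A = {j}"
        then have "A \<noteq> {j}" by blast
        then obtain j' where j': "j' \<in> A" "j' \<noteq> j" using j by blast
        define W where "W = (\<lambda>i. U - {i}) ` (U - {x})"
        have "\<exists>y. \<forall>B\<in>W \<union> {A}. y \<in> B"
        proof (rule hellyD[OF H])
          show "W \<union> {A} \<subseteq> F" using co A unfolding W_def by auto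
          show "W \<union> {A} \<noteq> {}" by blast
          fix B C assume "B \<in> W \<union> {A}" "C \<in> W \<union> {A}"
          then show "B \<inter> C \<noteq> {}"
          proof (rule pairwise_insert[rotated 3])
            show "A \<noteq> {}" using AU by simp
            show "B \<inter> A \<noteq> {}" if "B \<in> W" for B using that j j' AU unfolding W_def by auto
            show "B \<inter> C \<noteq> {}" if "B \<in> W" "C \<in> W" for B C using that x unfolding W_def by auto
          qed
        qed
        then obtain y where y: "\<forall>B\<in>W \<union> {A}. y \<in> B" by (elim exE)
        have "y \<in> A" using bspec[OF y, of A] by simp
        then have "y \<in> U" "y \<noteq> x" using AU A by auto
        then have "U - {y} \<in> W" unfolding W_def by blast
        then have "y \<in> U - {y}" using bspec[OF y, of "U - {y}"] by simp
        then show False by simp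
      qed
    qed
    have E2: "\<forall>A. A \<subseteq> U \<and> x \<in> A \<and> A \<noteq> U \<longrightarrow> A \<in> F"
    proof (intro allI impI)
      fix A assume A: "A \<subseteq> U \<and> x \<in> A \<and> A \<noteq> U"
      then have "A \<in> F \<or> U - A \<in> F" using T2 by auto
      then show "A \<in> F"
      proof
        assume cA: "U - A \<in> F"
        have "x \<notin> U - A" using A by simp
        then obtain j where j: "U - A = {j}" using E1 cA by blast
        then have "j \<in> U" "j \<noteq> x" using A by auto
        moreover have "A = U - {j}" using j A by auto
        ultimately show "A \<in> F" using co by simp
      qed
    qed
    show "\<exists>x\<in>U. (\<forall>j\<in>U-{x}. U-{j} \<in> F) \<and> (\<forall>A. A \<subseteq> U \<and> x \<in> A \<and> A \<noteq> U \<longrightarrow> A \<in> F)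
        \<and> (\<forall>A\<in>F. x \<notin> A \<longrightarrow> (\<exists>j. A = {j}))" using x(1) co E2 E1 by blast
  qed
  ultimately show ?thesis by blast
qed


theorem theorem1p2:
  fixes V :: "'a set" and E :: "'a \<Rightarrow> 'a \<Rightarrow> bool" and k :: nat
  assumes "k \<ge> 2"
    and "simple_graph V E"
    and "connected_graph V E"
    and "twin_free V E"
    and "i_max V E = k"
  shows "card V \<le> 2 ^ (k - 1) + k - 2 \<and>
         (card V = 2 ^ (k - 1) + k - 2 \<longrightarrow> clique_plus_subsets k V E)"
proof -
  have finV: "finite V" and Ein: "\<And>u v. E u v \<Longrightarrow> u \<in> V \<and> v \<in> V"
    and sym: "\<And>u v. E u v \<Longrightarrow> E v u" and irr: "\<And>v. \<not> E v v"
    using assms(2) unfolding simple_graph_def by auto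
  define MM where "MM = {S. maximal_independent V E S}"
  have cardMM: "card MM = k" using assms(5) unfolding i_max_def MM_def .
  have finMM: "finite MM" using cardMM assms(1) card.infinite by force
  have MMind: "independent V E M" if "M \<in> MM" for M
    using that unfolding MM_def maximal_independent_def by blast
  have MMV: "M \<subseteq> V" if "M \<in> MM" for M using MMind[OF that] unfolding independent_def by blast
  have extend: "\<exists>M\<in>MM. S \<subseteq> M" if S: "independent V E S" for S
  proof -
    define TT where "TT = {T. independent V E T \<and> S \<subseteq> T}"
    have "TT \<subseteq> Pow V" unfolding TT_def independent_def by blast
    then have finTT: "finite TT" using finV finite_subset by blast
    have "S \<in> TT" unfolding TT_def using S by blast
    then have "TT \<noteq> {}" by blast
    then obtain T where T: "T \<in> TT" "\<forall>b\<in>TT. T \<le> b \<longrightarrow> T = b"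
      using finite_has_maximal[OF finTT] by blast
    have "maximal_independent V E T"
      unfolding maximal_independent_def
    proof (intro conjI allI impI)
      show "independent V E T" using T unfolding TT_def by blast
      fix T' assume T': "independent V E T' \<and> T \<subseteq> T'"
      then have "T' \<in> TT" using T unfolding TT_def by blast
      then show "T' = T" using T T' by blast
    qed
    then show ?thesis using T unfolding MM_def TT_def by blast
  qed
  define \<sigma> where "\<sigma> = (\<lambda>v. {M\<in>MM. v \<in> M})"
  have adj: "E u v \<longleftrightarrow> \<sigma> u \<inter> \<sigma> v = {}" if uv: "u \<in> V" "v \<in> V" for u v
  proof
    assume Euv: "E u v"
    show "\<sigma> u \<inter> \<sigma> v = {}"
    proof (rule ccontr)
      assume "\<sigma> u \<inter> \<sigma> v \<noteq> {}"
      then obtain M where "M \<in> MM" "u \<in> M" "v \<in> M" unfolding \<sigma>_def by blast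
      then show False using MMind Euv unfolding independent_def by blast
    qed
  next
    assume dis: "\<sigma> u \<inter> \<sigma> v = {}"
    show "E u v"
    proof (rule ccontr)
      assume nE: "\<not> E u v"
      have "independent V E {u, v}"
        unfolding independent_def using uv nE irr sym by auto
      then obtain M where "M \<in> MM" "{u, v} \<subseteq> M" using extend by blast
      then have "M \<in> \<sigma> u \<inter> \<sigma> v" unfolding \<sigma>_def by simp
      then show False using dis by simp
    qed
  qed
  have \<sigma>ne: "\<sigma> v \<noteq> {}" if "v \<in> V" for v using adj[OF that that] irr by simp
  have \<sigma>sub: "\<sigma> v \<subseteq> MM" for v unfolding \<sigma>_def by blast
  have injs: "inj_on \<sigma> V"
  proof (rule inj_onI)
    fix u v assume uv: "u \<in> V" "v \<in> V" "\<sigma> u = \<sigma> v"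
    show "u = v"
    proof (rule ccontr)
      assume "u \<noteq> v"
      then have "nbhd V E u \<noteq> nbhd V E v" using assms(4) uv unfolding twin_free_def by blast
      moreover have "nbhd V E u = nbhd V E v"
        unfolding nbhd_def using adj uv by auto
      ultimately show False by simp
    qed
  qed
  have nbr: "\<exists>u\<in>V. E v u" if v: "v \<in> V" for v
  proof (rule ccontr)
    assume "\<not> (\<exists>u\<in>V. E v u)"
    then have noE: "\<And>u. \<not> E v u" using Ein by blast
    have Vv: "V = {v}"
    proof
      show "V \<subseteq> {v}"
      proof
        fix w assume w: "w \<in> V"
        then have "E\<^sup>*\<^sup>* v w" using assms(3) v unfolding connected_graph_def by blast
        then show "w \<in> {v}" by (cases rule: converse_rtranclpE) (auto simp: noE)
      qed
      show "{v} \<subseteq> V" using v by simp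
    qed
    have indv: "independent V E {v}" unfolding independent_def using Vv irr by simp
    have "MM = {{v}}"
    proof
      show "MM \<subseteq> {{v}}"
      proof
        fix M assume M: "M \<in> MM"
        then have "M \<subseteq> {v}" using MMV Vv by blast
        then show "M \<in> {{v}}" using M indv unfolding MM_def maximal_independent_def by blast
      qed
      have "maximal_independent V E {v}"
        unfolding maximal_independent_def using indv Vv unfolding independent_def by auto
      then show "{{v}} \<subseteq> MM" unfolding MM_def by simp
    qed
    then show False using cardMM assms(1) by simp
  qed
  have \<sigma>prop: "\<sigma> v \<noteq> MM" if v: "v \<in> V" for v
  proof
    assume eqM: "\<sigma> v = MM"
    obtain u where u: "u \<in> V" "E v u" using nbr[OF v] by blast
    then have "\<sigma> v \<inter> \<sigma> u = {}" using adj[OF v u(1)] by simp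
    then have "\<sigma> u = {}" using eqM \<sigma>sub[of u] by auto
    then show False using \<sigma>ne u by blast
  qed
  have H: "helly (\<sigma> ` V)"
    unfolding helly_def
  proof (intro allI impI)
    fix Q assume Q: "Q \<subseteq> \<sigma> ` V" "Q \<noteq> {}" "\<forall>A\<in>Q. \<forall>B\<in>Q. A \<inter> B \<noteq> {}"
    define W where "W = {v\<in>V. \<sigma> v \<in> Q}"
    have "independent V E W"
      unfolding independent_def W_def using Q(3) adj by auto
    then obtain M where M: "M \<in> MM" "W \<subseteq> M" using extend by blast
    have "M \<in> \<Inter>Q"
    proof
      fix A assume "A \<in> Q"
      then obtain w where "w \<in> V" "A = \<sigma> w" using Q(1) by blast
      then show "M \<in> A" using M \<open>A \<in> Q\<close> unfolding W_def \<sigma>_def by auto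
    qed
    then show "\<Inter>Q \<noteq> {}" by blast
  qed
  have FN: "\<forall>A\<in>\<sigma> ` V. A \<subseteq> MM \<and> A \<noteq> {} \<and> A \<noteq> MM" using \<sigma>sub \<sigma>ne \<sigma>prop by blast
  have cardF: "card (\<sigma> ` V) = card V" using card_image[OF injs] .
  note fm = family_main[OF finMM cardMM assms(1) FN H]
  have part1: "card V \<le> 2 ^ (k - 1) + k - 2" using fm cardF by simp
  moreover have "card V = 2 ^ (k - 1) + k - 2 \<longrightarrow> clique_plus_subsets k V E"
  proof
    assume eq: "card V = 2 ^ (k - 1) + k - 2"
    then obtain x where x: "x \<in> MM"
      and co: "\<forall>j\<in>MM-{x}. MM-{j} \<in> \<sigma> ` V"
      and E2: "\<forall>A. A \<subseteq> MM \<and> x \<in> A \<and> A \<noteq> MM \<longrightarrow> A \<in> \<sigma> ` V"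
      and E1: "\<forall>A\<in>\<sigma> ` V. x \<notin> A \<longrightarrow> (\<exists>j. A = {j})"
      using fm cardF by auto
    have starmax: "\<exists>u\<in>V. j \<in> \<sigma> u \<and> E u w" if j: "j \<in> MM" and w: "w \<in> V" "j \<notin> \<sigma> w" for j w
    proof (rule ccontr)
      assume no: "\<not> (\<exists>u\<in>V. j \<in> \<sigma> u \<and> E u w)"
      have wj: "w \<notin> j" using w j unfolding \<sigma>_def by simp
      have jV: "j \<subseteq> V" using MMV[OF j] .
      have noE: "\<not> E u w" if "u \<in> j" for u using no that jV j unfolding \<sigma>_def by auto
      have "independent V E (insert w j)"
        using MMind[OF j] w(1) noE sym irr unfolding independent_def by auto
      moreover have "j \<subseteq> insert w j" by auto
      ultimately have "insert w j = j" using j unfolding MM_def maximal_independent_def by blast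
      then show False using wj by auto
    qed
    have E3: "\<exists>u\<in>V. \<sigma> u = {j}" if j: "j \<in> MM - {x}" for j
    proof -
      have "MM - {j} \<in> \<sigma> ` V" using co j by blast
      then obtain w where w: "w \<in> V" "\<sigma> w = MM - {j}" by (metis imageE)
      then have "j \<notin> \<sigma> w" by simp
      then obtain u where u: "u \<in> V" "j \<in> \<sigma> u" "E u w" using starmax[of j w] j w by auto
      then have "\<sigma> u \<inter> \<sigma> w = {}" using adj[OF u(1) w(1)] by simp
      then have "\<sigma> u \<subseteq> {j}" using w(2) \<sigma>sub[of u] by auto
      then show ?thesis using u by auto
    qed
    have E1': "\<exists>j. \<sigma> v = {j}" if "v \<in> V" "x \<notin> \<sigma> v" for v using E1 that by auto
    define C where "C = {v\<in>V. x \<notin> \<sigma> v}"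
    have CV: "C \<subseteq> V" unfolding C_def by blast
    have clq: "clique V E C"
      unfolding clique_def
    proof (intro conjI ballI impI)
      show "C \<subseteq> V" by (fact CV)
      fix u v assume uv: "u \<in> C" "v \<in> C" "u \<noteq> v"
      then have uvV: "u \<in> V" "v \<in> V" unfolding C_def by auto
      obtain j where j: "\<sigma> u = {j}" using E1' uv unfolding C_def by blast
      obtain j' where j': "\<sigma> v = {j'}" using E1' uv unfolding C_def by blast
      have "\<sigma> u \<noteq> \<sigma> v" using injs uvV uv(3) unfolding inj_on_def by blast
      then have "\<sigma> u \<inter> \<sigma> v = {}" using j j' by auto
      then show "E u v" using adj[OF uvV] by simp
    qed
    have imgC: "\<sigma> ` C = (\<lambda>j. {j}) ` (MM - {x})"
    proof
      show "\<sigma> ` C \<subseteq> (\<lambda>j. {j}) ` (MM - {x})"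
      proof
        fix A assume "A \<in> \<sigma> ` C"
        then obtain v where v: "v \<in> V" "x \<notin> \<sigma> v" "A = \<sigma> v" unfolding C_def by blast
        obtain j where j: "\<sigma> v = {j}" using E1' v by blast
        then have "j \<in> MM - {x}" using \<sigma>sub[of v] v by auto
        then show "A \<in> (\<lambda>j. {j}) ` (MM - {x})" using j v by auto
      qed
      show "(\<lambda>j. {j}) ` (MM - {x}) \<subseteq> \<sigma> ` C"
      proof
        fix A assume "A \<in> (\<lambda>j. {j}) ` (MM - {x})"
        then obtain j where j: "j \<in> MM - {x}" "A = {j}" by blast
        obtain u where u: "u \<in> V" "\<sigma> u = {j}" using E3[OF j(1)] by blast
        then have "u \<in> C" unfolding C_def using j by auto
        then show "A \<in> \<sigma> ` C" using u j by auto
      qed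
    qed
    have cardC: "card C = k - 1"
    proof -
      have "card C = card (\<sigma> ` C)" using card_image[OF inj_on_subset[OF injs CV]] by simp
      also have "\<dots> = card (MM - {x})" unfolding imgC by (rule card_image) (simp add: inj_on_def)
      also have "\<dots> = k - 1" using cardMM x finMM by simp
      finally show ?thesis .
    qed
    have nbC: "nbhd V E v \<subseteq> C" if v: "v \<in> V" "x \<in> \<sigma> v" for v
    proof
      fix w assume "w \<in> nbhd V E v"
      then have w: "w \<in> V" "E v w" unfolding nbhd_def by auto
      then have "\<sigma> v \<inter> \<sigma> w = {}" using adj[OF v(1) w(1)] by simp
      then have "x \<notin> \<sigma> w" using v by auto
      then show "w \<in> C" unfolding C_def using w by simp
    qed
    have bij: "bij_betw (nbhd V E) (V - C) {S. S \<subseteq> C \<and> S \<noteq> {}}"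
      unfolding bij_betw_def
    proof (intro conjI)
      show "inj_on (nbhd V E) (V - C)"
      proof (rule inj_onI)
        fix u v assume uv: "u \<in> V - C" "v \<in> V - C" "nbhd V E u = nbhd V E v"
        show "u = v" using assms(4) uv unfolding twin_free_def by blast
      qed
      show "nbhd V E ` (V - C) = {S. S \<subseteq> C \<and> S \<noteq> {}}"
      proof
        show "nbhd V E ` (V - C) \<subseteq> {S. S \<subseteq> C \<and> S \<noteq> {}}"
        proof
          fix S assume "S \<in> nbhd V E ` (V - C)"
          then obtain v where v: "v \<in> V" "x \<in> \<sigma> v" "S = nbhd V E v" unfolding C_def by auto
          have "S \<subseteq> C" using nbC v by simp
          moreover obtain u where "u \<in> V" "E v u" using nbr v by blast
          then have "u \<in> S" using v unfolding nbhd_def by simp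
          ultimately show "S \<in> {S. S \<subseteq> C \<and> S \<noteq> {}}" by auto
        qed
        show "{S. S \<subseteq> C \<and> S \<noteq> {}} \<subseteq> nbhd V E ` (V - C)"
        proof
          fix S assume "S \<in> {S. S \<subseteq> C \<and> S \<noteq> {}}"
          then have S: "S \<subseteq> C" "S \<noteq> {}" by auto
          define A where "A = MM - \<Union>(\<sigma> ` S)"
          have xA: "x \<in> A" unfolding A_def using S(1) x unfolding C_def by auto
          obtain u0 where u0: "u0 \<in> S" using S by blast
          then have "u0 \<in> V" using S CV by blast
          then obtain j0 where "j0 \<in> \<sigma> u0" using \<sigma>ne by blast
          then have "j0 \<in> MM" "j0 \<notin> A" unfolding A_def using u0 \<sigma>sub by auto
          then have "A \<noteq> MM" by blast
          moreover have "A \<subseteq> MM" unfolding A_def by blast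
          ultimately have "A \<in> \<sigma> ` V" using E2 xA by blast
          then obtain v where v: "v \<in> V" "\<sigma> v = A" by blast
          have "nbhd V E v = S"
          proof
            show "nbhd V E v \<subseteq> S"
            proof
              fix w assume wn: "w \<in> nbhd V E v"
              then have w: "w \<in> V" "E v w" unfolding nbhd_def by auto
              have "w \<in> C" using nbC[of v] v xA wn by auto
              then obtain j where j: "\<sigma> w = {j}" using E1' unfolding C_def by blast
              have "\<sigma> v \<inter> \<sigma> w = {}" using adj[OF v(1) w(1)] w by simp
              then have "j \<notin> A" using v j by auto
              moreover have "j \<in> MM" using j \<sigma>sub[of w] by auto
              ultimately obtain u where u: "u \<in> S" "j \<in> \<sigma> u" unfolding A_def by auto
              have "u \<in> C" using u S by blast
              then obtain j' where j': "\<sigma> u = {j'}" using E1' unfolding C_def by blast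
              then have "\<sigma> u = \<sigma> w" using j u by auto
              moreover have "u \<in> V" using \<open>u \<in> C\<close> CV by blast
              ultimately have "u = w" using injs w(1) unfolding inj_on_def by blast
              then show "w \<in> S" using u by simp
            qed
            show "S \<subseteq> nbhd V E v"
            proof
              fix u assume u: "u \<in> S"
              then have uV: "u \<in> V" using S CV by blast
              have "\<sigma> u \<inter> A = {}" unfolding A_def using u by auto
              then have "E v u" using adj[OF v(1) uV] v by auto
              then show "u \<in> nbhd V E v" unfolding nbhd_def using uV by simp
            qed
          qed
          moreover have "v \<in> V - C" unfolding C_def using v xA by simp
          ultimately show "S \<in> nbhd V E ` (V - C)" by blast
        qed
      qed
    qed
    show "clique_plus_subsets k V E"
      unfolding clique_plus_subsets_def using clq cardC bij by blast
  qed
  ultimately show ?thesis by blast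
qed

end
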